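(* Let $n\ge2$ and let $\mathbf{r}$ be an $\mathbb{R}^n$-valued random vector with $\mathbb{E}|r_i|<\infty$ for all $i$; set $\mathbf{R}=e^{\mathbf{r}}$ (componentwise), $\mathbf{m}=\mathbb{E}[\mathbf{r}]$, and $J(\boldsymbol{\pi})=\mathbb{E}[\log\langle\boldsymbol{\pi},\mathbf{R}\rangle]-\langle\boldsymbol{\pi},\mathbf{m}\rangle$ for $\boldsymbol{\pi}\in\Delta_n$. If $\boldsymbol{\pi}^\star$ maximizes $J$ over $\Delta_n$, then for every $\boldsymbol{\pi}\in\Delta_n$, $$\mathbb{E}\Big[\log\frac{\langle\boldsymbol{\pi},\mathbf{R}\rangle}{\langle\boldsymbol{\pi}^\star,\mathbf{R}\rangle}\Big]\le\log\big(1+\langle\boldsymbol{\pi}-\boldsymbol{\pi}^\star,\mathbf{m}\rangle\big).$$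
   Context: $\Delta_n=\{\mathbf{x}\in[0,1]^n:\sum_ix_i=1\}$. $J(\boldsymbol{\pi})$ equals $\mathbb{E}[\gamma(\boldsymbol{\pi},\mathbf{r})]$ where $\gamma(\boldsymbol{\pi},\mathbf{r})=\log\big(\sum_{i:\pi_i>0}\pi_ie^{r_i}\big)-\sum_{i:\pi_i>0}\pi_ir_i$. *)

theory Defs
  imports "HOL-Probability.Probability"
begin

definition prob_simplex :: "('n::finite \<Rightarrow> real) set" where
  "prob_simplex = {x. (\<forall>i. 0 \<le> x i \<and> x i \<le> 1) \<and> (\<Sum>i\<in>UNIV. x i) = 1}"

definition ip :: "('n::finite \<Rightarrow> real) \<Rightarrow> ('n \<Rightarrow> real) \<Rightarrow> real" where
  "ip x y = (\<Sum>i\<in>UNIV. x i * y i)"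

definition mean_vec :: "'a measure \<Rightarrow> ('a \<Rightarrow> 'n::finite \<Rightarrow> real) \<Rightarrow> 'n \<Rightarrow> real" where
  "mean_vec M r = (\<lambda>i. integral\<^sup>L M (\<lambda>\<omega>. r \<omega> i))"

definition J :: "'a measure \<Rightarrow> ('a \<Rightarrow> 'n::finite \<Rightarrow> real) \<Rightarrow> ('n \<Rightarrow> real) \<Rightarrow> real" where
  "J M r p = integral\<^sup>L M (\<lambda>\<omega>. ln (ip p (\<lambda>i. exp (r \<omega> i)))) - ip p (mean_vec M r)"

end

theory Submission imports Defs begin

lemma ln_quot_mono:
  fixes s t y :: real
  assumes "0 < s" "s \<le> t" "t \<le> 1" "y > -1"
  shows "ln (1 + t*y) / t \<le> ln (1 + s*y) / s"
proof -
  have ty: "1 + t*y > 0"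
  proof (cases "y \<ge> 0")
    case True thus ?thesis using assms by (simp add: add_pos_nonneg)
  next
    case False
    have "t*y \<ge> 1*y" using assms False by (intro mult_right_mono_neg) auto
    thus ?thesis using assms by linarith
  qed
  define u where "u = s/t"
  have u: "0 \<le> u" "u \<le> 1" using assms by (auto simp: u_def)
  have eq: "1 + s*y = (1-u) *\<^sub>R 1 + u *\<^sub>R (1+t*y)" using assms by (simp add: u_def field_simps)
  have "(1-u) * ln 1 + u * ln (1+t*y) \<le> ln ((1-u) *\<^sub>R 1 + u *\<^sub>R (1+t*y))"
    by (rule concave_onD[OF ln_concave]) (use u ty in auto)
  hence "u * ln (1+t*y) \<le> ln (1+s*y)" by (simp only: eq) simp
  hence "s * (ln (1+t*y) / t) \<le> ln (1+s*y)" using assms u_def by simp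
  thus ?thesis using assms by (simp add: field_simps)
qed

lemma ln_seq_lim:
  fixes y :: real
  shows "(\<lambda>n. real (Suc n) * ln (1 + y / real (Suc n))) \<longlonglongrightarrow> y"
proof -
  have "(\<lambda>n. ln ((1 + y / real n) ^ n)) \<longlonglongrightarrow> ln (exp y)"
    by (rule tendsto_ln[OF tendsto_exp_limit_sequentially]) simp
  hence "(\<lambda>n. real n * ln (1 + y / real n)) \<longlonglongrightarrow> y" by (simp add: ln_realpow)
  thus ?thesis by (rule LIMSEQ_Suc)
qed

lemma ip_bounds:
  fixes q a :: "'n::finite \<Rightarrow> real"
  assumes "q \<in> prob_simplex"
  shows "exp (- (\<Sum>j\<in>UNIV. \<bar>a j\<bar>)) \<le> ip q (\<lambda>i. exp (a i))"
    and "ip q (\<lambda>i. exp (a i)) \<le> exp (\<Sum>j\<in>UNIV. \<bar>a j\<bar>)"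
proof -
  let ?S = "\<Sum>j\<in>UNIV. \<bar>a j\<bar>"
  have q: "\<And>i. 0 \<le> q i" "sum q UNIV = 1" using assms by (auto simp: prob_simplex_def)
  have ai: "\<bar>a i\<bar> \<le> ?S" for i by (rule member_le_sum) auto
  have "(\<Sum>i\<in>UNIV. q i * exp (- ?S)) \<le> (\<Sum>i\<in>UNIV. q i * exp (a i))"
    using ai q by (intro sum_mono mult_left_mono) (auto simp: abs_le_iff; smt (verit) ai abs_le_iff)
  moreover have "(\<Sum>i\<in>UNIV. q i * exp (- ?S)) = exp (- ?S)"
    using q by (simp add: sum_distrib_right[symmetric])
  ultimately show "exp (- ?S) \<le> ip q (\<lambda>i. exp (a i))" by (simp add: ip_def)
  have "(\<Sum>i\<in>UNIV. q i * exp (a i)) \<le> (\<Sum>i\<in>UNIV. q i * exp ?S)"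
    using ai q by (intro sum_mono mult_left_mono) (auto simp: abs_le_iff; smt (verit) ai abs_le_iff)
  moreover have "(\<Sum>i\<in>UNIV. q i * exp ?S) = exp ?S"
    using q by (simp add: sum_distrib_right[symmetric])
  ultimately show "ip q (\<lambda>i. exp (a i)) \<le> exp ?S" by (simp add: ip_def)
qed

lemma ip_pos:
  assumes "q \<in> prob_simplex"
  shows "0 < ip q (\<lambda>i. exp (a i))"
  using ip_bounds(1)[OF assms, of a] by (meson exp_gt_zero less_le_trans)

lemma ln_ip_abs:
  assumes "q \<in> prob_simplex"
  shows "\<bar>ln (ip q (\<lambda>i. exp (a i)))\<bar> \<le> (\<Sum>j\<in>UNIV. \<bar>a j\<bar>)"
proof -
  have p: "0 < ip q (\<lambda>i. exp (a i))" by (rule ip_pos[OF assms])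
  have "- (\<Sum>j\<in>UNIV. \<bar>a j\<bar>) \<le> ln (ip q (\<lambda>i. exp (a i)))"
    using ip_bounds(1)[OF assms, of a] p by (metis ln_exp ln_le_cancel_iff exp_gt_zero)
  moreover have "ln (ip q (\<lambda>i. exp (a i))) \<le> (\<Sum>j\<in>UNIV. \<bar>a j\<bar>)"
    using ip_bounds(2)[OF assms, of a] p by (metis ln_exp ln_le_cancel_iff exp_gt_zero)
  ultimately show ?thesis by linarith
qed

theorem mainTheorem20:
  fixes M :: "'a measure" and r :: "'a \<Rightarrow> 'n::finite \<Rightarrow> real"
    and pstar p :: "'n \<Rightarrow> real"
  assumes "prob_space M"
    and "CARD('n) \<ge> 2"
    and "\<And>i. (\<lambda>\<omega>. r \<omega> i) \<in> borel_measurable M"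
    and "\<And>i. integrable M (\<lambda>\<omega>. r \<omega> i)"
    and "pstar \<in> prob_simplex"
    and "\<And>q. q \<in> prob_simplex \<Longrightarrow> J M r q \<le> J M r pstar"
    and "p \<in> prob_simplex"
  shows "integral\<^sup>L M (\<lambda>\<omega>. ln (ip p (\<lambda>i. exp (r \<omega> i)) / ip pstar (\<lambda>i. exp (r \<omega> i))))
           \<le> ln (1 + ip (\<lambda>i. p i - pstar i) (mean_vec M r))"
proof -
  interpret prob_space M by fact
  note meas[measurable] = assms(3)
  define X where "X w = ip p (\<lambda>i. exp (r w i))" for w
  define Y where "Y w = ip pstar (\<lambda>i. exp (r w i))" for w
  define Z where "Z w = X w / Y w" for w
  define d where "d = ip (\<lambda>i. p i - pstar i) (mean_vec M r)"
  define m where "m = mean_vec M r"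
  have Xp: "X w > 0" for w unfolding X_def by (rule ip_pos[OF assms(7)])
  have Yp: "Y w > 0" for w unfolding Y_def by (rule ip_pos[OF assms(5)])
  have Zp: "Z w > 0" for w using Xp Yp by (simp add: Z_def)
  have ipmeas[measurable]: "(\<lambda>w. ip q (\<lambda>i. exp (r w i))) \<in> borel_measurable M" for q :: "'n \<Rightarrow> real"
    unfolding ip_def by measurable
  have Sint: "integrable M (\<lambda>w. \<Sum>j\<in>UNIV. \<bar>r w j\<bar>)"
    using assms(4) by (intro Bochner_Integration.integrable_sum Bochner_Integration.integrable_abs) auto
  have lnint: "integrable M (\<lambda>w. ln (ip q (\<lambda>i. exp (r w i))))" if "q \<in> prob_simplex" for q
  proof (rule Bochner_Integration.integrable_bound[OF Sint])
    show "(\<lambda>w. ln (ip q (\<lambda>i. exp (r w i)))) \<in> borel_measurable M" by measurable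
    show "AE x in M. norm (ln (ip q (\<lambda>i. exp (r x i)))) \<le> norm (\<Sum>j\<in>UNIV. \<bar>r x j\<bar>)"
      using ln_ip_abs[OF that] by (auto intro!: AE_I2 order.trans[OF _ abs_ge_self])
  qed
  define qt where "qt t = (\<lambda>i. pstar i + t * (p i - pstar i))" for t :: real
  have ps: "\<And>i. 0 \<le> pstar i \<and> pstar i \<le> 1" "sum pstar UNIV = 1"
    using assms(5) by (auto simp: prob_simplex_def)
  have pp: "\<And>i. 0 \<le> p i \<and> p i \<le> 1" "sum p UNIV = 1"
    using assms(7) by (auto simp: prob_simplex_def)
  have qts: "qt t \<in> prob_simplex" if "0 \<le> t" "t \<le> 1" for t
  proof -
    have c: "pstar i + t * (p i - pstar i) = (1-t) * pstar i + t * p i" for i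
      by (simp add: algebra_simps)
    have "0 \<le> (1-t) * pstar i + t * p i" for i using ps pp that by simp
    moreover have "(1-t) * pstar i + t * p i \<le> (1-t) * 1 + t * 1" for i
      using ps pp that by (intro add_mono mult_left_mono) auto
    moreover have "(\<Sum>i\<in>UNIV. (1-t) * pstar i + t * p i) = 1"
      using ps pp by (simp add: sum.distrib sum_distrib_left[symmetric])
    ultimately show ?thesis unfolding prob_simplex_def qt_def c by auto
  qed
  have ipqt: "ip (qt t) v = ip pstar v + t * ip (\<lambda>i. p i - pstar i) v" for t v
    unfolding ip_def qt_def
    by (simp add: algebra_simps sum.distrib sum_distrib_left sum_subtractf)
  have Jle: "integral\<^sup>L M (\<lambda>w. ln (ip (qt t) (\<lambda>i. exp (r w i)))) - integral\<^sup>L M (\<lambda>w. ln (Y w)) \<le> t * d"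
    if "0 \<le> t" "t \<le> 1" for t
    using assms(6)[OF qts[OF that]] unfolding J_def Y_def d_def ipqt[of t "mean_vec M r"] by simp
  have ipqtXY: "ip (qt t) (\<lambda>i. exp (r w i)) = Y w + t * (X w - Y w)" for t w
  proof -
    have "ip (\<lambda>i. p i - pstar i) v = ip p v - ip pstar v" for v
      unfolding ip_def by (simp add: sum_subtractf algebra_simps)
    thus ?thesis unfolding ipqt X_def Y_def by simp
  qed
  define f where "f n w = real (Suc n) * (ln (ip (qt (1 / real (Suc n))) (\<lambda>i. exp (r w i))) - ln (Y w))" for n w
  have fZ: "f n w = real (Suc n) * ln (1 + (Z w - 1) / real (Suc n))" for n w
  proof -
    let ?t = "1 / real (Suc n)"
    have pos: "0 < ip (qt ?t) (\<lambda>i. exp (r w i))" by (rule ip_pos[OF qts]) auto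
    have "ln (ip (qt ?t) (\<lambda>i. exp (r w i))) - ln (Y w) = ln (ip (qt ?t) (\<lambda>i. exp (r w i)) / Y w)"
      using pos Yp[of w] by (simp add: ln_div)
    also have "ip (qt ?t) (\<lambda>i. exp (r w i)) / Y w = 1 + (Z w - 1) / real (Suc n)"
    proof -
      have "Y w + real n * Y w > 0" using Yp[of w] by (simp add: add_pos_nonneg)
      thus ?thesis unfolding ipqtXY Z_def using Yp[of w] by (simp add: field_simps)
    qed
    finally show ?thesis unfolding f_def by simp
  qed
  have fint: "integrable M (f n)" for n
    unfolding f_def using lnint[OF qts] lnint[OF assms(5)] by (auto simp: Y_def)
  have fmono: "mono (\<lambda>n. f n w)" for w
  unfolding mono_iff_le_Suc
  proof
    fix n
    have "ln (1 + (1 / real (Suc n)) * (Z w - 1)) / (1 / real (Suc n))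
        \<le> ln (1 + (1 / real (Suc (Suc n))) * (Z w - 1)) / (1 / real (Suc (Suc n)))"
      using Zp[of w] by (intro ln_quot_mono) (auto simp: field_simps)
    thus "f n w \<le> f (Suc n) w" unfolding fZ by (simp add: field_simps)
  qed
  have flim: "(\<lambda>n. f n w) \<longlonglongrightarrow> Z w - 1" for w
    unfolding fZ by (rule ln_seq_lim)
  have fle: "integral\<^sup>L M (f n) \<le> d" for n
  proof -
    let ?t = "1 / real (Suc n)"
    have "integral\<^sup>L M (f n) = real (Suc n) * (integral\<^sup>L M (\<lambda>w. ln (ip (qt ?t) (\<lambda>i. exp (r w i)))) - integral\<^sup>L M (\<lambda>w. ln (Y w)))"
      unfolding f_def using lnint[OF qts] lnint[OF assms(5)] by (simp add: Y_def)
    also have "\<dots> \<le> real (Suc n) * (?t * d)"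
      using Jle[of ?t] by (intro mult_left_mono) auto
    also have "\<dots> = d" by simp
    finally show ?thesis .
  qed
  have inc: "incseq (\<lambda>n. integral\<^sup>L M (f n))"
    using fmono fint by (auto simp: incseq_def mono_def intro!: integral_mono)
  obtain L where L: "(\<lambda>n. integral\<^sup>L M (f n)) \<longlonglongrightarrow> L"
    using incseq_convergent[OF inc, of d] fle by blast
  have Ld: "L \<le> d" using L fle by (intro LIMSEQ_le_const2) auto
  have Zmeas: "(\<lambda>w. Z w - 1) \<in> borel_measurable M"
    unfolding Z_def X_def Y_def by measurable
  have Z1int: "integrable M (\<lambda>w. Z w - 1)" and Z1eq: "integral\<^sup>L M (\<lambda>w. Z w - 1) = L"
    using integrable_monotone_convergence[OF fint _ _ L Zmeas]
      integral_monotone_convergence[OF fint _ _ L Zmeas] fmono flim by auto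
  have Zeq: "Z = (\<lambda>w. (Z w - 1) + 1)" by simp
  have Zint: "integrable M Z" by (subst Zeq) (intro Bochner_Integration.integrable_add Z1int integrable_const)
  have EZ: "integral\<^sup>L M Z = L + 1"
  proof -
    have "integral\<^sup>L M (\<lambda>w. Z w - 1) = integral\<^sup>L M Z - 1"
      using Zint by (simp add: Bochner_Integration.integral_diff prob_space)
    thus ?thesis using Z1eq by simp
  qed
  define c where "c = L + 1"
  have cpos: "c > 0"
  proof (rule ccontr)
    assume "\<not> c > 0"
    moreover have "integral\<^sup>L M Z \<ge> 0" using Zp by (intro integral_nonneg_AE) (auto intro: less_imp_le)
    ultimately have "integral\<^sup>L M Z = 0" using EZ c_def by simp
    hence "AE w in M. Z w = 0" using integral_nonneg_eq_0_iff_AE[OF Zint] Zp by (auto intro: less_imp_le)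
    hence "AE w in M. False" using Zp by (auto elim: AE_mp intro!: AE_I2 simp: less_le)
    thus False by simp
  qed
  have lnZint: "integrable M (\<lambda>w. ln (Z w))"
  proof -
    have "f 0 = (\<lambda>w. ln (Z w))" by (rule ext) (simp add: fZ)
    thus ?thesis using fint[of 0] by simp
  qed
  have pw: "ln (Z w) \<le> ln c + (Z w / c - 1)" for w
  proof -
    have "ln (Z w / c) \<le> Z w / c - 1" using Zp[of w] cpos by (intro ln_le_minus_one) simp
    thus ?thesis using Zp[of w] cpos by (simp add: ln_div)
  qed
  have "integral\<^sup>L M (\<lambda>w. ln (Z w)) \<le> integral\<^sup>L M (\<lambda>w. ln c + (Z w / c - 1))"
    using lnZint Zint pw by (intro integral_mono) auto
  also have "\<dots> = ln c + (integral\<^sup>L M Z / c - 1)"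
    using Zint by (simp add: Bochner_Integration.integral_add Bochner_Integration.integral_diff prob_space)
  also have "\<dots> = ln c" using EZ c_def cpos by simp
  also have "\<dots> \<le> ln (1 + d)" using cpos Ld c_def by simp
  finally show ?thesis unfolding d_def Z_def X_def Y_def .
qed

end
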